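(* Fix $p\ge1$, $\beta\in\mathbb R^p$, $\sigma^2>0$ and $\alpha_0\in(0,1)$; let $(X_n)$ be a fixed sequence of full-column-rank design matrices with $p$ columns, $Y_n=X_n\beta+\epsilon_n$ with $\epsilon_n\sim\mathcal N(0,\sigma^2I)$, and $$E_1:=\Big\{Y:\ \tfrac{n-p-1}{p}\cdot\tfrac{Y^\top P_{X_n}Y}{Y^\top(I-P_{X_n})Y}\ge F^{-1}_{p,n-p-1}(1-\alpha_0)\Big\}.$$ Suppose $f$ is a real-valued function of $Y_n$ such that $\Pr(f(Y_n)>\varepsilon)\to0$ as $n\to\infty$ for every $\varepsilon>0$. Then $\Pr(f(Y_n)>\varepsilon\mid Y_n\in E_1)\to0$ for every $\varepsilon>0$.
   Context: $P_A:=A(A^\top A)^{-1}A^\top$; $F_{a,b}$ is the CDF of the $F_{a,b}$ distribution. $E_1$ is the rejection event of the level-$\alpha_0$ overall $F$-test of $\beta_1=\dots=\beta_p=0$. *)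

theory Defs
  imports "HOL-Probability.Probability"
begin

text \<open>Design matrix X_n with n rows and p columns, p = CARD('p) fixed:
  represented by its rows, X :: nat => real^'p, row i for i < n.\<close>

definition full_col_rank :: "nat \<Rightarrow> (nat \<Rightarrow> real^'p) \<Rightarrow> bool" where
  "full_col_rank n X \<longleftrightarrow> (\<forall>c::real^'p. (\<forall>i<n. X i \<bullet> c = 0) \<longrightarrow> c = 0)"

definition gram :: "nat \<Rightarrow> (nat \<Rightarrow> real^'p) \<Rightarrow> real^'p^'p" where
  "gram n X = (\<chi> j k. \<Sum>i<n. X i $ j * X i $ k)"

definition Xt_mult :: "nat \<Rightarrow> (nat \<Rightarrow> real^'p) \<Rightarrow> (nat \<Rightarrow> real) \<Rightarrow> real^'p" where
  "Xt_mult n X y = (\<Sum>i<n. y i *\<^sub>R X i)"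

text \<open>Y^T P_X Y = (X^T Y)^T (X^T X)^{-1} (X^T Y)\<close>
definition proj_quad :: "nat \<Rightarrow> (nat \<Rightarrow> real^'p) \<Rightarrow> (nat \<Rightarrow> real) \<Rightarrow> real" where
  "proj_quad n X y = Xt_mult n X y \<bullet> (matrix_inv (gram n X) *v Xt_mult n X y)"

definition resid_quad :: "nat \<Rightarrow> (nat \<Rightarrow> real^'p) \<Rightarrow> (nat \<Rightarrow> real) \<Rightarrow> real" where
  "resid_quad n X y = (\<Sum>i<n. (y i)\<^sup>2) - proj_quad n X y"

definition F_density :: "real \<Rightarrow> real \<Rightarrow> real \<Rightarrow> real" where
  "F_density a b x = (if x > 0 then
     (a / b) powr (a / 2) * x powr (a / 2 - 1) * (1 + a * x / b) powr (- (a + b) / 2)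
       / (Beta (a / 2) (b / 2) :: real)
   else 0)"

definition F_cdf :: "real \<Rightarrow> real \<Rightarrow> real \<Rightarrow> real" where
  "F_cdf a b t = (LINT x:{..t}|lborel. F_density a b x)"

definition F_quantile :: "real \<Rightarrow> real \<Rightarrow> real \<Rightarrow> real" where
  "F_quantile a b q = Inf {x. q \<le> F_cdf a b x}"

definition Ydist :: "nat \<Rightarrow> (nat \<Rightarrow> real^'p) \<Rightarrow> real^'p \<Rightarrow> real \<Rightarrow> (nat \<Rightarrow> real) measure" where
  "Ydist n X \<beta> \<sigma>2 = PiM {..<n} (\<lambda>i. density lborel (normal_density (X i \<bullet> \<beta>) (sqrt \<sigma>2)))"

definition F_stat :: "nat \<Rightarrow> (nat \<Rightarrow> real^'p) \<Rightarrow> (nat \<Rightarrow> real) \<Rightarrow> real" where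
  "F_stat n X y = (real n - real CARD('p) - 1) / real CARD('p) * (proj_quad n X y / resid_quad n X y)"

definition E1 :: "nat \<Rightarrow> (nat \<Rightarrow> real^'p) \<Rightarrow> real^'p \<Rightarrow> real \<Rightarrow> real \<Rightarrow> (nat \<Rightarrow> real) set" where
  "E1 n X \<beta> \<sigma>2 \<alpha>0 = {y \<in> space (Ydist n X \<beta> \<sigma>2).
     F_quantile (real CARD('p)) (real n - real CARD('p) - 1) (1 - \<alpha>0) \<le> F_stat n X y}"

definition cond_pr :: "'a measure \<Rightarrow> 'a set \<Rightarrow> 'a set \<Rightarrow> real" where
  "cond_pr M A B = measure M (A \<inter> B) / measure M B"

end

theory Submission
  imports Defs
begin



lemma gram_mulv: "gram n X *v c = (\<Sum>i<n. (X i \<bullet> c) *\<^sub>R X i)"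
  unfolding gram_def
  apply (simp add: vec_eq_iff matrix_vector_mult_def inner_vec_def sum_distrib_left sum_distrib_right
      mult_ac sum_component)
  apply (intro allI)
  apply (rule sum.swap)
  done

lemma inner_gram: "d \<bullet> (gram n X *v c) = (\<Sum>i<n. (X i \<bullet> d) * (X i \<bullet> c))"
  by (simp add: gram_mulv inner_sum_right inner_commute mult_ac)

lemma Xt_inner: "Xt_mult n X y \<bullet> d = (\<Sum>i<n. y i * (X i \<bullet> d))"
  by (simp add: Xt_mult_def inner_sum_left)

lemma gram_inj:
  assumes "full_col_rank n X" "gram n X *v c = 0" shows "c = 0"
proof -
  have "(\<Sum>i<n. (X i \<bullet> c)^2) = 0"
    using inner_gram[of c n X c] assms(2) by (simp add: power2_eq_square)
  then have "\<forall>i<n. X i \<bullet> c = 0"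
    by (subst (asm) sum_nonneg_eq_0_iff) auto
  then show ?thesis using assms(1) unfolding full_col_rank_def by blast
qed

lemma gram_inv:
  assumes "full_col_rank n X"
  shows "gram n X *v (matrix_inv (gram n X) *v z) = z"
proof -
  have "\<exists>B. B ** gram n X = mat 1"
    using gram_inj[OF assms] by (simp add: matrix_left_invertible_ker)
  then have "invertible (gram n X)" by (simp add: invertible_left_inverse)
  then have "\<exists>A'. gram n X ** A' = mat 1 \<and> A' ** gram n X = mat 1"
    by (simp add: invertible_def)
  then have "gram n X ** matrix_inv (gram n X) = mat 1"
    unfolding matrix_inv_def by (rule someI2_ex) auto
  then show ?thesis by (simp add: matrix_vector_mul_assoc)
qed

definition wv :: "nat \<Rightarrow> (nat \<Rightarrow> real^'p) \<Rightarrow> (nat \<Rightarrow> real) \<Rightarrow> real^'p" where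
  "wv n X y = matrix_inv (gram n X) *v Xt_mult n X y"

lemma key:
  assumes "full_col_rank n X"
  shows "(\<Sum>i<n. (X i \<bullet> d) * (X i \<bullet> wv n X y)) = (\<Sum>i<n. y i * (X i \<bullet> d))"
proof -
  have "d \<bullet> (gram n X *v wv n X y) = d \<bullet> Xt_mult n X y"
    using gram_inv[OF assms] by (simp add: wv_def)
  moreover have "d \<bullet> (gram n X *v wv n X y) = (\<Sum>i<n. (X i \<bullet> d) * (X i \<bullet> wv n X y))"
    by (simp add: inner_gram)
  moreover have "d \<bullet> Xt_mult n X y = (\<Sum>i<n. y i * (X i \<bullet> d))"
    by (metis inner_commute Xt_inner)
  ultimately show ?thesis by simp
qed

lemma proj_eq: "proj_quad n X y = (\<Sum>i<n. y i * (X i \<bullet> wv n X y))"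
  by (simp add: proj_quad_def Xt_inner wv_def)

lemma proj_sq:
  assumes "full_col_rank n X"
  shows "proj_quad n X y = (\<Sum>i<n. (X i \<bullet> wv n X y)^2)"
  using key[OF assms, of "wv n X y" y] by (simp add: proj_eq power2_eq_square)

lemma proj_lower:
  assumes "full_col_rank n X"
  shows "(\<Sum>i<n. y i * (X i \<bullet> c))^2 \<le> proj_quad n X y * (\<Sum>i<n. (X i \<bullet> c)^2)"
proof -
  have "(\<Sum>i<n. y i * (X i \<bullet> c)) = (\<Sum>i<n. (X i \<bullet> wv n X y) * (X i \<bullet> c))"
    using key[OF assms, of c y] by (simp add: mult_ac)
  also have "(\<dots>)^2 \<le> (\<Sum>i<n. (X i \<bullet> wv n X y)^2) * (\<Sum>i<n. (X i \<bullet> c)^2)"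
    by (rule Cauchy_Schwarz_ineq_sum)
  finally show ?thesis using proj_sq[OF assms] by simp
qed

lemma resid_eq:
  assumes "full_col_rank n X"
  shows "resid_quad n X y = (\<Sum>i<n. (y i - X i \<bullet> wv n X y)^2)"
proof -
  have "(\<Sum>i<n. (y i - X i \<bullet> wv n X y)^2) = (\<Sum>i<n. (y i)^2) - 2 * (\<Sum>i<n. y i * (X i \<bullet> wv n X y))
     + (\<Sum>i<n. (X i \<bullet> wv n X y)^2)"
    by (simp add: power2_diff sum.distrib sum_subtractf sum_distrib_left mult_ac)
  then show ?thesis using proj_sq[OF assms, of y] proj_eq[of n X y]
    by (simp add: resid_quad_def)
qed

lemma resid_le:
  assumes "full_col_rank n X"
  shows "resid_quad n X y \<le> (\<Sum>i<n. (y i - X i \<bullet> b)^2)"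
proof -
  let ?w = "wv n X y"
  define d where "d = ?w - b"
  have eq: "y i - X i \<bullet> b = (y i - X i \<bullet> ?w) + X i \<bullet> d" for i
    by (simp add: d_def inner_diff_right)
  have cross: "(\<Sum>i<n. (y i - X i \<bullet> ?w) * (X i \<bullet> d)) = 0"
  proof -
    have "(\<Sum>i<n. (y i - X i \<bullet> ?w) * (X i \<bullet> d)) = (\<Sum>i<n. y i * (X i \<bullet> d)) - (\<Sum>i<n. (X i \<bullet> d) * (X i \<bullet> ?w))"
      by (simp add: sum_subtractf[symmetric] algebra_simps)
    then show ?thesis using key[OF assms, of d y] by simp
  qed
  have "(\<Sum>i<n. (y i - X i \<bullet> b)^2) = (\<Sum>i<n. (y i - X i \<bullet> ?w)^2) + 2 * (\<Sum>i<n. (y i - X i \<bullet> ?w) * (X i \<bullet> d))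
      + (\<Sum>i<n. (X i \<bullet> d)^2)"
  proof -
    have "(\<Sum>i<n. (y i - X i \<bullet> b)^2) = (\<Sum>i<n. (y i - X i \<bullet> ?w)^2 + 2 * ((y i - X i \<bullet> ?w) * (X i \<bullet> d)) + (X i \<bullet> d)^2)"
      by (rule sum.cong[OF refl], subst eq, simp add: power2_sum)
    then show ?thesis by (simp add: sum.distrib sum_distrib_left)
  qed
  also have "\<dots> \<ge> (\<Sum>i<n. (y i - X i \<bullet> ?w)^2)"
    using cross by (simp add: sum_nonneg)
  finally show ?thesis using resid_eq[OF assms] by simp
qed

lemma resid_nonneg:
  assumes "full_col_rank n X"
  shows "resid_quad n X y \<ge> 0"
  using resid_eq[OF assms] by (simp add: sum_nonneg)

lemma resid_zero:
  assumes "full_col_rank n X" "resid_quad n X y = 0"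
    "(\<Sum>i<n. v i *\<^sub>R X i) = 0"
  shows "(\<Sum>i<n. v i * y i) = 0"
proof -
  have "(\<Sum>i<n. (y i - X i \<bullet> wv n X y)^2) = 0"
    using assms(2) resid_eq[OF assms(1), of y] by simp
  then have "\<forall>i\<in>{..<n}. (y i - X i \<bullet> wv n X y)^2 = 0"
    by (subst (asm) sum_nonneg_eq_0_iff) auto
  then have "\<forall>i<n. y i = X i \<bullet> wv n X y" by auto
  then have "(\<Sum>i<n. v i * y i) = (\<Sum>i<n. v i * (X i \<bullet> wv n X y))" by simp
  also have "\<dots> = (\<Sum>i<n. v i *\<^sub>R X i) \<bullet> wv n X y"
    by (simp add: inner_sum_left)
  finally show ?thesis using assms(3) by simp
qed

lemma left_null:
  fixes X :: "nat \<Rightarrow> real^'p"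
  assumes "n > CARD('p)"
  shows "\<exists>v. (\<exists>i<n. v i \<noteq> 0) \<and> (\<Sum>i<n. v i *\<^sub>R X i) = 0"
proof (cases "inj_on X {..<n}")
  case False
  then obtain i j where ij: "i < n" "j < n" "i \<noteq> j" "X i = X j"
    unfolding inj_on_def by auto
  define v where "v k = (if k = i then 1 else if k = j then -1 else (0::real))" for k
  have "(\<Sum>k<n. v k *\<^sub>R X k) = (\<Sum>k\<in>{i,j}. v k *\<^sub>R X k)"
    by (rule sum.mono_neutral_right) (use ij in \<open>auto simp: v_def\<close>)
  also have "\<dots> = 0" using ij by (simp add: v_def)
  finally show ?thesis using ij by (intro exI[of _ v]) (auto simp: v_def)
next
  case True
  have "card (X ` {..<n}) = n" using True by (simp add: card_image)
  then have "dependent (X ` {..<n})"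
    using assms by (intro dependent_biggerset) simp
  then obtain u where u: "\<exists>x\<in>X ` {..<n}. u x \<noteq> 0" "(\<Sum>x\<in>X ` {..<n}. u x *\<^sub>R x) = 0"
    by (subst (asm) dependent_finite) auto
  have "(\<Sum>i<n. u (X i) *\<^sub>R X i) = 0"
    using u(2) by (simp add: sum.reindex[OF True])
  then show ?thesis using u(1) by (intro exI[of _ "\<lambda>i. u (X i)"]) auto
qed




lemma Beta_pos_real: "a > 0 \<Longrightarrow> b > 0 \<Longrightarrow> Beta a b > (0::real)"
  by (simp add: Beta_def Gamma_real_pos)

lemma not_nonpos_pos: "(x::real) > 0 \<Longrightarrow> x \<notin> \<int>\<^sub>\<le>\<^sub>0"
  using nonpos_Ints_nonpos by force

lemma Beta_shift:
  assumes "al > 0" "be > 1"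
  shows "Beta (al + 1) (be - 1) = al / (be - 1) * Beta al (be::real)"
proof -
  have 1: "(al + (be - 1)) * Beta (al + 1) (be - 1) = al * Beta al (be - 1)"
    by (rule Beta_plus1_left) (rule not_nonpos_pos, fact)
  have 2: "(al + (be - 1)) * Beta al (be - 1 + 1) = (be - 1) * Beta al (be - 1)"
    by (rule Beta_plus1_right) (rule not_nonpos_pos, use assms in simp)
  define S where "S = al + (be - 1)"
  have S: "S > 0" using assms by (simp add: S_def)
  have B': "Beta al (be - 1) = S * Beta al be / (be - 1)"
    using 2 assms by (simp add: S_def field_simps)
  have "Beta (al + 1) (be - 1) = al * Beta al (be - 1) / S"
    using 1 S by (simp add: S_def field_simps)
  also have "\<dots> = al / (be - 1) * Beta al be" using S by (simp add: B')
  finally show ?thesis .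
qed

lemma F_density_subst:
  fixes a b t :: real
  assumes a: "a > 0" and b: "b > 0" and t: "0 \<le> t" "t < 1"
  shows "F_density a b (b / a * t / (1 - t)) * (b / a / (1 - t)^2)
       = t powr (a/2 - 1) * (1 - t) powr (b/2 - 1) / Beta (a/2) (b/2)"
proof (cases "t = 0")
  case True then show ?thesis by (simp add: F_density_def)
next
  case False
  then have t0: "t > 0" using t by simp
  have t1: "1 - t > 0" using t by simp
  have pos: "b / a * t / (1 - t) > 0" using a b t0 t1 by simp
  have e1: "1 + a * (b / a * t / (1 - t)) / b = 1 / (1 - t)"
    using a b t1 by (simp add: field_simps)
  have "(a / b) powr (a / 2) * (b / a * t / (1 - t)) powr (a / 2 - 1) * (1 / (1 - t)) powr (- (a + b) / 2)
        * (b / a / (1 - t)^2) = t powr (a/2 - 1) * (1 - t) powr (b/2 - 1)"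
  proof -
    have f1: "(a / b) powr (a / 2) = exp (a/2 * (ln a - ln b))"
      using a b by (simp add: powr_def ln_div)
    have f2: "(b / a * t / (1 - t)) powr (a / 2 - 1) = exp ((a/2 - 1) * (ln b - ln a + ln t - ln (1 - t)))"
      using a b t0 t1 by (simp add: powr_def ln_div ln_mult)
    have f3: "(1 / (1 - t)) powr (- (a + b) / 2) = exp ((a + b) / 2 * ln (1 - t))"
      using t1 by (simp add: powr_def ln_div algebra_simps)
    have f4: "b / a / (1 - t)^2 = exp (ln b - ln a - 2 * ln (1 - t))"
    proof -
      have "exp (2 * ln (1 - t)) = (1 - t)^2"
      proof -
        have "exp (2 * ln (1 - t)) = (1 - t) powr 2" using t1 by (simp add: powr_def)
        also have "\<dots> = (1 - t)^2" using t1 by (simp add: powr_numeral)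
        finally show ?thesis .
      qed
      then show ?thesis using a b by (simp add: exp_diff)
    qed
    have f5: "t powr (a/2 - 1) * (1 - t) powr (b/2 - 1) = exp ((a/2 - 1) * ln t + (b/2 - 1) * ln (1 - t))"
      using t0 t1 by (simp add: powr_def exp_add)
    have "a/2 * (ln a - ln b) + (a/2 - 1) * (ln b - ln a + ln t - ln (1 - t)) + (a + b) / 2 * ln (1 - t)
          + (ln b - ln a - 2 * ln (1 - t)) = (a/2 - 1) * ln t + (b/2 - 1) * ln (1 - t)"
      by (simp add: field_simps)
    then show ?thesis unfolding f1 f2 f3 f4 f5 by (simp add: exp_add[symmetric])
  qed
  note H = this
  have dv: "\<And>x c g. (x / (c::real)) * g = (x * g) / c" by simp
  show ?thesis
    apply (subst F_density_def)
    apply (subst if_P[OF pos])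
    apply (subst e1)
    apply (rule trans[OF times_divide_eq_left])
    apply (subst H)
    apply (rule refl)
    done
qed




lemma F_density_nonneg: "a > 0 \<Longrightarrow> b > 0 \<Longrightarrow> F_density a b x \<ge> 0"
  using Beta_pos_real[of "a/2" "b/2"] by (simp add: F_density_def)

lemma F_density_meas[measurable]: "F_density a b \<in> borel_measurable borel"
  unfolding F_density_def by measurable

lemma F_cdf_eq:
  fixes a b Q :: real
  assumes a: "a > 0" and b: "b > 0" and Q: "Q > 0"
  defines "T \<equiv> a * Q / (b + a * Q)"
  shows "F_cdf a b Q = (LINT t:{0..T}|lborel. t powr (a/2 - 1) * (1 - t) powr (b/2 - 1) / Beta (a/2) (b/2))"
proof -
  define g where "g t = b / a * t / (1 - t)" for t :: real
  define g' where "g' t = b / a / (1 - t)^2" for t :: real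
  have aQ: "a * Q > 0" using a Q by simp
  have den: "b + a * Q > 0" using aQ b by simp
  have T0: "0 < T" unfolding T_def using aQ den by simp
  have T1: "T < 1" unfolding T_def using den b by (simp add: divide_less_eq)
  have oneT: "1 - T = b / (b + a * Q)" using den by (simp add: T_def field_simps)
  have r0: "T / (1 - T) = (a * Q / (b + a * Q)) / (b / (b + a * Q))"
    by (subst oneT) (simp add: T_def)
  have dd: "\<And>x y d::real. d \<noteq> 0 \<Longrightarrow> (x / d) / (y / d) = x / y"
    by (simp add: divide_divide_eq_left divide_divide_eq_right)
  have r: "T / (1 - T) = a * Q / b" unfolding r0 using den
    by (intro dd) simp
  have gT: "g T = Q"
  proof -
    have "g T = b / a * (T / (1 - T))" by (simp add: g_def)
    also have "\<dots> = Q" using a b by (simp add: r)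
    finally show ?thesis .
  qed
  have g0: "g 0 = 0" by (simp add: g_def)
  have "F_cdf a b Q = integral\<^sup>L lborel (\<lambda>x. indicator {..Q} x *\<^sub>R F_density a b x)"
    by (simp add: F_cdf_def set_lebesgue_integral_def)
  also have "\<dots> = enn2real (\<integral>\<^sup>+ x. ennreal (indicator {..Q} x *\<^sub>R F_density a b x) \<partial>lborel)"
    by (rule integral_eq_nn_integral) (auto simp: F_density_nonneg a b)
  also have "(\<integral>\<^sup>+ x. ennreal (indicator {..Q} x *\<^sub>R F_density a b x) \<partial>lborel)
      = (\<integral>\<^sup>+ x. ennreal (F_density a b x * indicator {g 0..g T} x) \<partial>lborel)"
    unfolding g0 gT
    by (intro nn_integral_cong) (auto simp: indicator_def F_density_def)
  also have "\<dots> = (\<integral>\<^sup>+ x. ennreal (F_density a b (g x) * g' x * indicator {0..T} x) \<partial>lborel)"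
  proof (rule nn_integral_substitution)
    show "set_borel_measurable borel {g 0..g T} (F_density a b)"
      unfolding set_borel_measurable_def by measurable
    show "(g has_real_derivative g' x) (at x)" if "x \<in> {0..T}" for x
    proof -
      have "x < 1" using that T1 by auto
      then have nz: "1 - x \<noteq> 0" "(1 - x) * (1 - x) \<noteq> 0" by auto
      show ?thesis unfolding g_def g'_def using a nz
        by (auto intro!: derivative_eq_intros simp: power2_eq_square divide_simps) (simp add: algebra_simps)
    qed
    show "continuous_on {0..T} g'"
      unfolding g'_def using T1 by (intro continuous_intros) auto
    show "0 \<le> g' x" if "x \<in> {0..T}" for x using a b by (simp add: g'_def)
  qed (use T0 in simp)
  also have "\<dots> = (\<integral>\<^sup>+ x. ennreal (indicator {0..T} x *\<^sub>R (x powr (a/2 - 1) * (1 - x) powr (b/2 - 1) / Beta (a/2) (b/2))) \<partial>lborel)"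
  proof (intro nn_integral_cong)
    fix x :: real
    show "ennreal (F_density a b (g x) * g' x * indicator {0..T} x) =
      ennreal (indicator {0..T} x *\<^sub>R (x powr (a/2 - 1) * (1 - x) powr (b/2 - 1) / Beta (a/2) (b/2)))"
    proof (cases "x \<in> {0..T}")
      case True
      then have "0 \<le> x" "x < 1" using T1 by auto
      then show ?thesis using True F_density_subst[OF a b, of x] by (simp add: g_def g'_def)
    qed simp
  qed
  also have "enn2real \<dots> = integral\<^sup>L lborel (\<lambda>x. indicator {0..T} x *\<^sub>R (x powr (a/2 - 1) * (1 - x) powr (b/2 - 1) / Beta (a/2) (b/2)))"
    by (rule integral_eq_nn_integral[symmetric])
       (auto intro!: divide_nonneg_nonneg less_imp_le[OF Beta_pos_real] simp: a b)
  finally show ?thesis by (simp add: set_lebesgue_integral_def)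
qed




lemma set_integral_nonneg':
  fixes f :: "real \<Rightarrow> real"
  shows "(\<And>x. x \<in> A \<Longrightarrow> 0 \<le> f x) \<Longrightarrow> 0 \<le> (LINT x:A|M. f x)"
  unfolding set_lebesgue_integral_def
  by (rule Bochner_Integration.integral_nonneg) (auto simp: indicator_def)

lemma LINT_Beta:
  fixes al be :: real
  assumes "al > 0" "be > 0"
  shows "(LINT t:{0..1}|lborel. t powr (al - 1) * (1 - t) powr (be - 1)) = Beta al be"
  using set_borel_integral_eq_integral(2)[OF integrable_Beta[OF assms]]
    integral_unique[OF has_integral_Beta_real[OF assms]] by simp

lemma F_cdf_lower:
  fixes a b \<alpha>0 :: real
  assumes a: "a > 0" and b: "b \<ge> 4" and al0: "0 < \<alpha>0" "\<alpha>0 < 1"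
  shows "1 - \<alpha>0 \<le> F_cdf a b (2 / \<alpha>0)"
proof -
  define Q where "Q = 2 / \<alpha>0"
  have Q: "Q > 0" using al0 by (simp add: Q_def)
  define T where "T = a * Q / (b + a * Q)"
  define al where "al = a / 2"
  define be where "be = b / 2"
  have al: "al > 0" using a by (simp add: al_def)
  have be: "be > 1" using b by (simp add: be_def)
  define h where "h t = t powr (al - 1) * (1 - t) powr (be - 1)" for t :: real
  define h2 where "h2 t = t powr (al + 1 - 1) * (1 - t) powr (be - 1 - 1)" for t :: real
  define B where "B = Beta al be"
  have Bpos: "B > 0" using al be by (simp add: B_def Beta_pos_real)
  have aQ: "a * Q > 0" using a Q by simp
  have den: "b + a * Q > 0" using aQ b by simp
  have T0: "0 < T" unfolding T_def using aQ den by simp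
  have T1: "T < 1" unfolding T_def using den b by (simp add: divide_less_eq)
  define c where "c = b / (a * Q)"
  have c0: "c > 0" using a b Q by (simp add: c_def)
  have int1: "set_integrable lborel {0..1} h"
    unfolding h_def using integrable_Beta[OF al, of be] be by simp
  have int2: "set_integrable lborel {0..1} h2"
    unfolding h2_def using integrable_Beta[of "al + 1" "be - 1"] al be by simp
  have I1: "(LINT t:{0..1}|lborel. h t) = B"
    unfolding h_def B_def using LINT_Beta[OF al, of be] be by simp
  have I2: "(LINT t:{0..1}|lborel. h2 t) = al / (be - 1) * B"
    unfolding h2_def B_def using LINT_Beta[of "al + 1" "be - 1"] al be Beta_shift[OF al be] by simp
  have split: "{0..1} = {0..T} \<union> {T<..(1::real)}" using T0 T1 by auto
  have disj: "{0..T} \<inter> {T<..(1::real)} = {}" by auto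
  have subA: "{0..T} \<subseteq> {0..(1::real)}" "{T<..1} \<subseteq> {0..(1::real)}" using T0 T1 by auto
  have int1a: "set_integrable lborel {0..T} h" and int1b: "set_integrable lborel {T<..1} h"
    using set_integrable_subset[OF int1] subA by auto
  have int2a: "set_integrable lborel {0..T} h2" and int2b: "set_integrable lborel {T<..1} h2"
    using set_integrable_subset[OF int2] subA by auto
  have S1: "(LINT t:{0..1}|lborel. h t) = (LINT t:{0..T}|lborel. h t) + (LINT t:{T<..1}|lborel. h t)"
    by (subst split, rule set_integral_Un[OF disj int1a int1b])
  have S2: "(LINT t:{0..1}|lborel. h2 t) = (LINT t:{0..T}|lborel. h2 t) + (LINT t:{T<..1}|lborel. h2 t)"
    by (subst split, rule set_integral_Un[OF disj int2a int2b])
  have h2nn: "0 \<le> (LINT t:{0..T}|lborel. h2 t)"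
    by (rule set_integral_nonneg') (simp add: h2_def)
  have pw: "h t \<le> c * h2 t" if "t \<in> {T<..1}" for t
  proof (cases "t = 1")
    case True then show ?thesis using be by (simp add: h_def h2_def)
  next
    case False
    with that have t0: "t > 0" and t1: "t < 1" using T0 by auto
    have "h2 t = h t * (t / (1 - t))"
    proof -
      have "t powr (al + 1 - 1) = t powr ((al - 1) + 1)" by simp
      also have "\<dots> = t powr (al - 1) * t powr 1" by (rule powr_add)
      finally have "t powr (al + 1 - 1) = t powr (al - 1) * t" using t0 by simp
      moreover have "(1 - t) powr (be - 1 - 1) = (1 - t) powr (be - 1) / (1 - t)"
      proof -
        have "(1 - t) powr (be - 1) = (1 - t) powr ((be - 1 - 1) + 1)" by simp
        also have "\<dots> = (1 - t) powr (be - 1 - 1) * (1 - t) powr 1" by (rule powr_add)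
        finally show ?thesis using t1 by simp
      qed
      ultimately show ?thesis by (simp add: h_def h2_def)
    qed
    moreover have "c * (t / (1 - t)) \<ge> 1"
    proof -
      have "t * (b + a * Q) \<ge> a * Q"
        using that den by (simp add: T_def divide_less_eq mult.commute)
      then have "b * t \<ge> a * Q * (1 - t)" by (simp add: algebra_simps)
      moreover have dpos: "a * Q * (1 - t) > 0" using t1 aQ by simp
      moreover have "c * (t / (1 - t)) = (b * t) / (a * Q * (1 - t))" by (simp add: c_def)
      ultimately show ?thesis by (simp add: le_divide_eq)
    qed
    moreover have "h t \<ge> 0" by (simp add: h_def)
    ultimately have "h t * 1 \<le> h t * (c * (t / (1 - t)))"
      by (intro mult_left_mono) auto
    also have "\<dots> = c * h2 t" using \<open>h2 t = h t * (t / (1 - t))\<close> by simp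
    finally show ?thesis by simp
  qed
  have "(LINT t:{T<..1}|lborel. h t) \<le> (LINT t:{T<..1}|lborel. c * h2 t)"
    by (rule set_integral_mono[OF int1b]) (auto intro: set_integrable_mult_right int2b pw)
  also have "\<dots> = c * (LINT t:{T<..1}|lborel. h2 t)" by (rule set_integral_mult_right)
  also have "\<dots> \<le> c * (al / (be - 1) * B)"
    using S2 I2 h2nn c0 by (intro mult_left_mono) auto
  also have "c * (al / (be - 1)) \<le> \<alpha>0"
  proof -
    have "c * (al / (be - 1)) = b * \<alpha>0 / (2 * (b - 2))"
      using a b al0 by (simp add: c_def al_def be_def Q_def field_simps)
    also have "\<dots> \<le> \<alpha>0" using b al0 by (simp add: divide_le_eq field_simps)
    finally show ?thesis .
  qed
  then have "(c * (al / (be - 1))) * B \<le> \<alpha>0 * B"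
    using Bpos by (intro mult_right_mono) auto
  then have "c * (al / (be - 1) * B) \<le> \<alpha>0 * B" by (simp add: mult.assoc)
  finally have tail: "(LINT t:{T<..1}|lborel. h t) \<le> \<alpha>0 * B" .
  have "(LINT t:{0..T}|lborel. h t) \<ge> (1 - \<alpha>0) * B"
    using S1 I1 tail by (simp add: algebra_simps)
  moreover have "F_cdf a b Q = (LINT t:{0..T}|lborel. h t) / B"
  proof -
    have bpos: "b > 0" using b by simp
    show ?thesis using F_cdf_eq[OF a bpos Q]
      by (simp add: T_def h_def al_def be_def B_def set_integral_divide_zero)
  qed
  ultimately have "B * 1 \<le> B * (\<alpha>0 + F_cdf a b Q)" using Bpos by (simp add: field_simps)
  then have "1 \<le> \<alpha>0 + F_cdf a b Q" using Bpos by (simp add: mult_le_cancel_left_pos)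
  then show ?thesis by (simp add: Q_def)
qed

lemma F_quantile_upper:
  fixes a b \<alpha>0 :: real
  assumes a: "a > 0" and b: "b \<ge> 4" and al0: "0 < \<alpha>0" "\<alpha>0 < 1"
  shows "F_quantile a b (1 - \<alpha>0) \<le> 2 / \<alpha>0"
  unfolding F_quantile_def
proof (rule cInf_lower)
  show "2 / \<alpha>0 \<in> {x. 1 - \<alpha>0 \<le> F_cdf a b x}" using F_cdf_lower[OF assms] by simp
  show "bdd_below {x. 1 - \<alpha>0 \<le> F_cdf a b x}"
  proof (rule bdd_belowI)
    fix x assume x: "x \<in> {x. 1 - \<alpha>0 \<le> F_cdf a b x}"
    show "0 \<le> x"
    proof (rule ccontr)
      assume "\<not> 0 \<le> x"
      then have "F_cdf a b x = 0"
        unfolding F_cdf_def set_lebesgue_integral_def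
        by (subst Bochner_Integration.integral_cong[of _ _ _ "\<lambda>_. 0"]) (auto simp: indicator_def F_density_def)
      then show False using x al0 by simp
    qed
  qed
qed




definition GM :: "nat \<Rightarrow> (nat \<Rightarrow> real) \<Rightarrow> real \<Rightarrow> (nat \<Rightarrow> real) measure" where
  "GM n mu sd = PiM {..<n} (\<lambda>i. density lborel (normal_density (mu i) sd))"

lemma Ydist_GM: "Ydist n X \<beta> \<sigma>2 = GM n (\<lambda>i. X i \<bullet> \<beta>) (sqrt \<sigma>2)"
  by (simp add: Ydist_def GM_def)

lemma GM_prob: "sd > 0 \<Longrightarrow> prob_space (GM n mu sd)"
  unfolding GM_def by (intro prob_space_PiM prob_space_normal_density)

lemma GM_sets: "sets (GM n mu sd) = sets (PiM {..<n} (\<lambda>_. borel))"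
  unfolding GM_def by (rule sets_PiM_cong) simp_all

lemma GM_space: "space (GM n mu sd) = space (PiM {..<n} (\<lambda>_. borel :: real measure))"
  by (rule sets_eq_imp_space_eq[OF GM_sets])

lemma GM_meas_cong: "measurable (GM n mu sd) N = measurable (PiM {..<n} (\<lambda>_. borel)) N"
  by (rule measurable_cong_sets[OF GM_sets refl])
lemma GM_comp_meas: "i < n \<Longrightarrow> (\<lambda>y. y i) \<in> borel_measurable (GM n mu sd)"
  unfolding GM_meas_cong using measurable_component_singleton[of i "{..<n}" "\<lambda>_. borel"] by simp

lemma GM_lin_meas: "(\<lambda>y. \<Sum>i<n. a i * y i) \<in> borel_measurable (GM n mu sd)"
  by (intro borel_measurable_sum borel_measurable_times borel_measurable_const GM_comp_meas) simp

lemma GM_sq_meas: "(\<lambda>y. \<Sum>i<n. (y i - mu' i)^2) \<in> borel_measurable (GM n mu sd)"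
  by (intro borel_measurable_sum borel_measurable_power borel_measurable_diff borel_measurable_const GM_comp_meas) simp
lemma GM_distr_comp:
  assumes "sd > 0" "i < n"
  shows "distributed (GM n mu sd) lborel (\<lambda>y. y i) (normal_density (mu i) sd)"
  unfolding distributed_def
proof (intro conjI)
  have "distr (GM n mu sd) lborel (\<lambda>y. y i) = distr (GM n mu sd) (density lborel (normal_density (mu i) sd)) (\<lambda>y. y i)"
    by (rule distr_cong) simp_all
  also have "\<dots> = density lborel (normal_density (mu i) sd)"
    unfolding GM_def using assms
    by (subst distr_PiM_component[where M="\<lambda>i. density lborel (normal_density (mu i) sd)"])
       (simp_all add: prob_space_normal_density)
  finally show "distr (GM n mu sd) lborel (\<lambda>y. y i) = density lborel (normal_density (mu i) sd)" .
  show "(\<lambda>x. ennreal (normal_density (mu i) sd x)) \<in> borel_measurable lborel" by simp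
  show "(\<lambda>y. y i) \<in> GM n mu sd \<rightarrow>\<^sub>M lborel"
    using GM_comp_meas[OF assms(2)] by simp
qed
lemma GM_indep:
  assumes sd: "sd > 0" and n: "n > 0"
  shows "prob_space.indep_vars (GM n mu sd) (\<lambda>_. borel) (\<lambda>i y. y i) {..<n}"
proof -
  interpret prob_space "GM n mu sd" by (rule GM_prob[OF sd])
  have "distr (GM n mu sd) (PiM {..<n} (\<lambda>_. borel)) (\<lambda>x. \<lambda>i\<in>{..<n}. x i)
      = distr (GM n mu sd) (PiM {..<n} (\<lambda>_. borel)) (\<lambda>x. x)"
    by (rule distr_cong) (auto simp: GM_space space_PiM PiE_def extensional_def fun_eq_iff)
  also have "\<dots> = GM n mu sd" by (rule distr_id2[OF GM_sets[symmetric]])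
  also have "\<dots> = PiM {..<n} (\<lambda>i. density lborel (normal_density (mu i) sd))"
    by (rule GM_def)
  also have "\<dots> = PiM {..<n} (\<lambda>i. distr (GM n mu sd) borel (\<lambda>x. x i))"
  proof (rule PiM_cong)
    fix i assume i: "i \<in> {..<n}"
    have "distr (GM n mu sd) borel (\<lambda>x. x i) = distr (GM n mu sd) lborel (\<lambda>x. x i)"
      by (rule distr_cong) simp_all
    also have "\<dots> = density lborel (normal_density (mu i) sd)"
      using GM_distr_comp[OF sd, of i n mu] i by (simp add: distributed_def)
    finally show "density lborel (normal_density (mu i) sd) = distr (GM n mu sd) borel (\<lambda>x. x i)" by simp
  qed simp
  finally show ?thesis
    using n by (subst indep_vars_iff_distr_eq_PiM') (auto intro: GM_comp_meas)
qed

lemma GM_lincomb: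
  assumes sd: "sd > 0" and i0: "i0 < n" "a i0 \<noteq> 0"
  shows "distributed (GM n mu sd) lborel (\<lambda>y. \<Sum>i<n. a i * y i)
           (normal_density (\<Sum>i<n. a i * mu i) (sd * sqrt (\<Sum>i<n. (a i)^2)))"
proof -
  interpret prob_space "GM n mu sd" by (rule GM_prob[OF sd])
  define I where "I = {i\<in>{..<n}. a i \<noteq> 0}"
  have I: "finite I" "I \<noteq> {}" "I \<subseteq> {..<n}" using i0 by (auto simp: I_def)
  have ind0: "indep_vars (\<lambda>_. borel) (\<lambda>i y. y i) I"
    using indep_vars_subset[OF GM_indep[OF sd, of n mu] I(3)] i0 by simp
  have ind: "indep_vars (\<lambda>_. borel) (\<lambda>i y. a i * y i) I"
    using indep_vars_compose2[OF ind0, of "\<lambda>i x. a i * x" "\<lambda>_. borel"] by simp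
  have dist: "distributed (GM n mu sd) lborel (\<lambda>y. a i * y i) (normal_density (a i * mu i) (\<bar>a i\<bar> * sd))"
    if "i \<in> I" for i
  proof -
    have "i < n" "a i \<noteq> 0" using that by (auto simp: I_def)
    from normal_density_affine[OF GM_distr_comp[OF sd \<open>i < n\<close>] sd \<open>a i \<noteq> 0\<close>, of 0]
    show ?thesis by simp
  qed
  have "distributed (GM n mu sd) lborel (\<lambda>y. \<Sum>i\<in>I. a i * y i)
      (normal_density (\<Sum>i\<in>I. a i * mu i) (sqrt (\<Sum>i\<in>I. (\<bar>a i\<bar> * sd)^2)))"
    by (rule sum_indep_normal[OF I(1,2) ind _ dist]) (use sd I_def in auto)
  moreover have "(\<lambda>y. \<Sum>i\<in>I. a i * y i) = (\<lambda>y. \<Sum>i<n. a i * y i)"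
    by (intro ext sum.mono_neutral_left) (auto simp: I_def)
  moreover have "(\<Sum>i\<in>I. a i * mu i) = (\<Sum>i<n. a i * mu i)"
    by (intro sum.mono_neutral_left) (auto simp: I_def)
  moreover have "sqrt (\<Sum>i\<in>I. (\<bar>a i\<bar> * sd)^2) = sd * sqrt (\<Sum>i<n. (a i)^2)"
  proof -
    have "(\<Sum>i\<in>I. (\<bar>a i\<bar> * sd)^2) = (\<Sum>i\<in>I. sd^2 * (a i)^2)"
      by (intro sum.cong) (auto simp: power_mult_distrib)
    also have "\<dots> = (\<Sum>i<n. sd^2 * (a i)^2)"
      by (intro sum.mono_neutral_left) (auto simp: I_def)
    also have "\<dots> = sd^2 * (\<Sum>i<n. (a i)^2)" by (simp add: sum_distrib_left)
    finally have "(\<Sum>i\<in>I. (\<bar>a i\<bar> * sd)^2) = sd^2 * (\<Sum>i<n. (a i)^2)" .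
    then show ?thesis using sd by (simp add: real_sqrt_mult)
  qed
  ultimately show ?thesis by simp
qed


lemma (in prob_space) normal_tail:
  assumes D: "distributed M lborel Z (normal_density m \<tau>)" and tau: "\<tau> > 0" and m: "m \<ge> 0"
  shows "measure M {x\<in>space M. \<tau> * t \<le> Z x} \<ge> measure (density lborel std_normal_density) {t..}"
proof -
  have Zm[measurable]: "Z \<in> borel_measurable M" using distributed_measurable[OF D] by simp
  define W where "W x = (Z x - m) / \<tau>" for x
  have DW: "distributed M lborel W std_normal_density"
    using D normal_standard_normal_convert[OF tau, of Z m] by (simp add: W_def[abs_def])
  have Wm: "W \<in> M \<rightarrow>\<^sub>M lborel" using distributed_measurable[OF DW] .
  have "measure (density lborel std_normal_density) {t..} = measure (distr M lborel W) {t..}"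
    using DW by (simp add: distributed_def)
  also have "\<dots> = measure M (W -` {t..} \<inter> space M)"
    by (rule measure_distr[OF Wm]) simp
  also have "\<dots> \<le> measure M {x\<in>space M. \<tau> * t \<le> Z x}"
  proof -
    have "\<tau> * t \<le> Z x" if "t \<le> W x" for x
    proof -
      have "t \<le> (Z x - m) / \<tau>" using that by (simp add: W_def)
      then have "\<tau> * t \<le> Z x - m" using tau by (simp add: le_divide_eq mult.commute)
      then show "\<tau> * t \<le> Z x" using m by simp
    qed
    then have sub: "W -` {t..} \<inter> space M \<subseteq> {x \<in> space M. \<tau> * t \<le> Z x}"
      by auto
    have "{x \<in> space M. \<tau> * t \<le> Z x} \<in> sets M" by measurable
    with sub show ?thesis by (rule finite_measure_mono)
  qed
  finally show ?thesis .
qed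

lemma std_tail_pos: "measure (density lborel std_normal_density) {t..} > 0"
proof -
  let ?N = "density lborel std_normal_density"
  interpret N: prob_space ?N using prob_space_normal_density[of 1 0] by simp
  have "emeasure ?N {t..} \<noteq> 0"
  proof
    assume "emeasure ?N {t..} = 0"
    then have "(\<integral>\<^sup>+ x. ennreal (std_normal_density x) * indicator {t..} x \<partial>lborel) = 0"
      by (subst (asm) emeasure_density) auto
    then have "AE x in lborel. ennreal (std_normal_density x) * indicator {t..} x = 0"
      by (subst (asm) nn_integral_0_iff_AE) auto
    then have "AE x in lborel. x \<notin> {t..}"
    proof (rule eventually_mono)
    fix x assume "ennreal (std_normal_density x) * indicator {t..} x = 0"
    moreover have "std_normal_density x > 0" by (rule normal_density_pos) simp
    ultimately show "x \<notin> {t..}" by (auto simp: indicator_def)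
  qed
    then have "emeasure lborel {t..} = 0"
      by (subst (asm) AE_iff_measurable[OF _ refl]) (auto simp: atLeast_def)
    moreover have "emeasure lborel {t..t+1} \<le> emeasure lborel {t..}"
      by (rule emeasure_mono) auto
    ultimately show False by simp
  qed
  then show ?thesis
    using N.emeasure_eq_measure[of "{t..}"] measure_nonneg[of ?N "{t..}"] by (auto simp: less_le)
qed

lemma (in prob_space) normal_zero:
  assumes D: "distributed M lborel Z (normal_density m \<tau>)"
  shows "measure M {x\<in>space M. Z x = 0} = 0"
proof -
  have "emeasure M (Z -` {0} \<inter> space M) = (\<integral>\<^sup>+ x\<in>{0}. ennreal (normal_density m \<tau> x) \<partial>lborel)"
    by (rule distributed_emeasure[OF D]) simp
  also have "\<dots> = 0"
    by (rule nn_integral_0_iff_AE[THEN iffD2])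
       (auto intro!: eventually_mono[OF AE_lborel_singleton[of 0]] simp: indicator_def)
  finally have "emeasure M (Z -` {0} \<inter> space M) = 0" .
  moreover have "Z -` {0} \<inter> space M = {x\<in>space M. Z x = 0}" by auto
  ultimately show ?thesis by (simp add: measure_def)
qed


lemma normal_exp_pointwise:
  assumes sd: "sd > 0"
  shows "normal_density m sd x * exp ((x - m)^2 / (4 * sd^2)) = sqrt 2 * normal_density m (sqrt 2 * sd) x"
proof -
  define d where "d = (x - m)^2"
  have sq: "(sqrt 2 * sd)^2 = 2 * sd^2" by (simp add: power_mult_distrib)
  have ee: "exp (- d / (2 * sd^2)) * exp (d / (4 * sd^2)) = exp (- d / (2 * (2 * sd^2)))"
    by (subst exp_add[symmetric], rule arg_cong[where f=exp]) (use sd in \<open>simp add: field_simps\<close>)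
  have q: "sqrt (2 * pi * (2 * sd^2)) = sqrt 2 * sqrt (2 * pi * sd^2)"
    by (simp add: real_sqrt_mult[symmetric] mult_ac)
  have "normal_density m sd x * exp ((x - m)^2 / (4 * sd^2))
      = 1 / sqrt (2 * pi * sd^2) * (exp (- d / (2 * sd^2)) * exp (d / (4 * sd^2)))"
    unfolding normal_density_def d_def by simp
  also have "\<dots> = 1 / sqrt (2 * pi * sd^2) * exp (- d / (2 * (2 * sd^2)))" by (simp only: ee)
  also have "\<dots> = sqrt 2 * (1 / sqrt (2 * pi * (2 * sd^2)) * exp (- d / (2 * (2 * sd^2))))"
    unfolding q by simp
  also have "\<dots> = sqrt 2 * normal_density m (sqrt 2 * sd) x"
    unfolding normal_density_def d_def sq ..
  finally show ?thesis .
qed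

lemma normal_exp_moment:
  assumes sd: "sd > 0"
  shows "(\<integral>\<^sup>+ x. ennreal (exp ((x - m)^2 / (4 * sd^2))) \<partial>density lborel (normal_density m sd)) = ennreal (sqrt 2)"
proof -
  have "(\<integral>\<^sup>+ x. ennreal (exp ((x - m)^2 / (4 * sd^2))) \<partial>density lborel (normal_density m sd))
      = (\<integral>\<^sup>+ x. ennreal (normal_density m sd x) * ennreal (exp ((x - m)^2 / (4 * sd^2))) \<partial>lborel)"
    by (subst nn_integral_density) auto
  also have "\<dots> = (\<integral>\<^sup>+ x. ennreal (sqrt 2) * ennreal (normal_density m (sqrt 2 * sd) x) \<partial>lborel)"
    by (intro nn_integral_cong)
       (simp add: ennreal_mult'[symmetric] normal_exp_pointwise[OF sd])
  also have "\<dots> = ennreal (sqrt 2) * (\<integral>\<^sup>+ x. ennreal (normal_density m (sqrt 2 * sd) x) \<partial>lborel)"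
    by (rule nn_integral_cmult) simp
  also have "(\<integral>\<^sup>+ x. ennreal (normal_density m (sqrt 2 * sd) x) \<partial>lborel) = 1"
    using sd by (subst nn_integral_eq_integral) (auto intro: integrable_normal_density integral_normal_density)
  finally show ?thesis by simp
qed


lemma GM_chernoff:
  assumes sd: "sd > 0"
  shows "measure (GM n mu sd) {y\<in>space (GM n mu sd). 2 * real n * sd^2 < (\<Sum>i<n. (y i - mu i)^2)}
           \<le> (sqrt 2 / exp (1/2))^n"
proof -
  let ?M = "GM n mu sd"
  let ?N = "\<lambda>i. density lborel (normal_density (mu i) sd)"
  interpret P: prob_space ?M by (rule GM_prob[OF sd])
  interpret PS: product_prob_space ?N
    by (rule product_prob_spaceI) (rule prob_space_normal_density[OF sd])
  define s where "s = 1 / (4 * sd^2)"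
  define F where "F y = (\<Sum>i<n. (y i - mu i)^2)" for y
  define u where "u y = ennreal (exp (s * F y))" for y
  define c where "c = exp (- real n / 2)"
  have Fm: "F \<in> borel_measurable ?M" unfolding F_def by (rule GM_sq_meas)
  have um'[measurable]: "u \<in> borel_measurable ?M"
    unfolding u_def using Fm by measurable
  have um: "(\<lambda>x. u x * indicator (space ?M) x) \<in> borel_measurable ?M"
    by measurable
  have sub: "{y\<in>space ?M. 2 * real n * sd^2 < F y} \<subseteq> {x\<in>space ?M. 1 \<le> ennreal c * u x}"
  proof safe
    fix y assume "y \<in> space ?M" "2 * real n * sd^2 < F y"
    then have "real n / 2 < s * F y" using sd by (simp add: s_def field_simps)
    then have "exp (real n / 2) \<le> exp (s * F y)" by simp
    then have "1 \<le> c * exp (s * F y)" by (simp add: c_def exp_minus field_simps)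
    then show "1 \<le> ennreal c * u y" by (simp add: u_def ennreal_mult'[symmetric] c_def)
  qed
  have "emeasure ?M {y\<in>space ?M. 2 * real n * sd^2 < F y} \<le> emeasure ?M {x\<in>space ?M. 1 \<le> ennreal c * u x}"
    by (rule emeasure_mono[OF sub]) measurable
  also have "\<dots> \<le> ennreal c * (\<integral>\<^sup>+ x\<in>space ?M. u x \<partial>?M)"
    by (rule nn_integral_Markov_inequality[OF um]) simp
  also have "(\<integral>\<^sup>+ x\<in>space ?M. u x \<partial>?M) = (\<integral>\<^sup>+ x. u x \<partial>?M)"
    by (intro nn_integral_cong) (simp add: indicator_def)
  also have "\<dots> = (\<integral>\<^sup>+ x. (\<Prod>i\<in>{..<n}. ennreal (exp ((x i - mu i)^2 / (4 * sd^2)))) \<partial>PiM {..<n} ?N)"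
    unfolding GM_def
  proof (intro nn_integral_cong)
    fix x
    have "exp (s * F x) = (\<Prod>i<n. exp ((x i - mu i)^2 / (4 * sd^2)))"
      by (simp add: F_def s_def sum_distrib_left exp_sum)
    then show "u x = (\<Prod>i\<in>{..<n}. ennreal (exp ((x i - mu i)^2 / (4 * sd^2))))"
      by (simp add: u_def prod_ennreal)
  qed
  also have "\<dots> = (\<Prod>i\<in>{..<n}. \<integral>\<^sup>+ x. ennreal (exp ((x - mu i)^2 / (4 * sd^2))) \<partial>?N i)"
    by (rule PS.product_nn_integral_prod) auto
  also have "\<dots> = (\<Prod>i\<in>{..<n}. ennreal (sqrt 2))"
    by (intro prod.cong refl normal_exp_moment[OF sd])
  also have "\<dots> = ennreal (sqrt 2 ^ n)" by (simp add: prod_ennreal ennreal_power)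
  finally have "emeasure ?M {y\<in>space ?M. 2 * real n * sd^2 < F y} \<le> ennreal (c * sqrt 2 ^ n)"
    by (simp add: ennreal_mult'[symmetric] c_def)
  then have "measure ?M {y\<in>space ?M. 2 * real n * sd^2 < F y} \<le> c * sqrt 2 ^ n"
    by (simp add: P.emeasure_eq_measure c_def)
  also have "c * sqrt 2 ^ n = (sqrt 2 / exp (1/2))^n"
  proof -
    have "exp (1/2) ^ n = exp (real n / 2)" by (simp add: exp_of_nat_mult[symmetric])
    then show ?thesis by (simp add: c_def power_divide exp_minus field_simps)
  qed
  finally show ?thesis by (simp add: F_def)
qed




lemma key_lower:
  fixes Xn :: "nat \<Rightarrow> real^'p" and \<beta> :: "real^'p"
  assumes s2: "\<sigma>2 > 0" and al0: "0 < \<alpha>0" "\<alpha>0 < 1"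
    and fr: "full_col_rank n Xn" and nlarge: "n \<ge> 3 * CARD('p) + 5"
  shows "\<exists>B \<in> sets (Ydist n Xn \<beta> \<sigma>2). B \<subseteq> E1 n Xn \<beta> \<sigma>2 \<alpha>0 \<and>
     measure (Ydist n Xn \<beta> \<sigma>2) B \<ge>
       measure (density lborel std_normal_density) {sqrt (3 * real CARD('p) * (2 / \<alpha>0))..}
       - (sqrt 2 / exp (1/2))^n"
proof -
  define p where "p = CARD('p)"
  have p1: "p \<ge> 1" by (simp add: p_def)
  define sd where "sd = sqrt \<sigma>2"
  have sd: "sd > 0" using s2 by (simp add: sd_def)
  have sd2: "sd^2 = \<sigma>2" using s2 by (simp add: sd_def)
  define mu where "mu i = Xn i \<bullet> \<beta>" for i
  define M where "M = Ydist n Xn \<beta> \<sigma>2"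
  have M: "M = GM n mu sd" by (simp add: M_def Ydist_GM mu_def[abs_def] sd_def)
  interpret P: prob_space M unfolding M by (rule GM_prob[OF sd])
  define Q where "Q = 2 / \<alpha>0"
  have Q: "Q > 0" using al0 by (simp add: Q_def)
  define s where "s = 3 * real p * Q"
  have s: "s > 0" using Q p1 by (simp add: s_def)
  define t where "t = sqrt s"
  define cst where "cst = measure (density lborel std_normal_density) {t..}"
  define cv :: "real^'p" where "cv = (\<chi> i. 1)"
  have cv: "cv \<noteq> 0" by (simp add: cv_def vec_eq_iff)
  define u where "u i = Xn i \<bullet> cv" for i
  obtain i0 where i0: "i0 < n" "u i0 \<noteq> 0"
    using fr cv unfolding full_col_rank_def u_def by blast
  define Su where "Su = (\<Sum>i<n. (u i)^2)"
  have Su: "Su > 0"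
  proof -
    have "(u i0)^2 \<le> Su" unfolding Su_def
      by (rule member_le_sum) (use i0 in auto)
    moreover have "(u i0)^2 > 0" using i0 by simp
    ultimately show ?thesis by linarith
  qed
  define \<tau> where "\<tau> = sd * sqrt Su"
  have tau: "\<tau> > 0" using sd Su by (simp add: \<tau>_def)
  define Z where "Z y = (\<Sum>i<n. u i * y i)" for y
  have np: "n > CARD('p)" using nlarge by simp
  obtain v where v: "\<exists>i<n. v i \<noteq> 0" "(\<Sum>i<n. v i *\<^sub>R Xn i) = 0"
    using left_null[OF np] by blast
  obtain j0 where j0: "j0 < n" "v j0 \<noteq> 0" using v(1) by blast
  define V where "V = {y\<in>space M. (\<Sum>i<n. v i * y i) = 0}"
  define C where "C = {y\<in>space M. 2 * real n * sd^2 < (\<Sum>i<n. (y i - mu i)^2)}"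
  define U where "U = {y\<in>space M. \<tau> * t \<le> \<bar>Z y\<bar>}"
  have Zm[measurable]: "Z \<in> borel_measurable M" unfolding M Z_def by (rule GM_lin_meas)
  have Vm[measurable]: "(\<lambda>y. \<Sum>i<n. v i * y i) \<in> borel_measurable M" unfolding M by (rule GM_lin_meas)
  have Cm[measurable]: "(\<lambda>y. \<Sum>i<n. (y i - mu i)^2) \<in> borel_measurable M" unfolding M by (rule GM_sq_meas)
  have Us: "U \<in> sets M" unfolding U_def by measurable
  have Vs: "V \<in> sets M" unfolding V_def by measurable
  have Cs: "C \<in> sets M" unfolding C_def by measurable
  define B where "B = U - C - V"
  have Bs: "B \<in> sets M" unfolding B_def using Us Cs Vs by auto
  have DZ: "distributed M lborel Z (normal_density (\<Sum>i<n. u i * mu i) \<tau>)"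
    unfolding M Z_def \<tau>_def Su_def by (rule GM_lincomb[where a=u, OF sd i0])
  have mU: "measure M U \<ge> cst"
  proof (cases "(\<Sum>i<n. u i * mu i) \<ge> 0")
    case True
    have "cst \<le> measure M {x\<in>space M. \<tau> * t \<le> Z x}"
      unfolding cst_def by (rule P.normal_tail[OF DZ tau True])
    also have "\<dots> \<le> measure M U"
      by (rule P.finite_measure_mono[OF _ Us]) (auto simp: U_def)
    finally show ?thesis .
  next
    case False
    have DZ': "distributed M lborel (\<lambda>y. \<Sum>i<n. (- u i) * y i)
        (normal_density (\<Sum>i<n. (- u i) * mu i) (sd * sqrt (\<Sum>i<n. (- u i)^2)))"
      unfolding M by (rule GM_lincomb[where a="\<lambda>i. - u i", OF sd i0(1)]) (use i0 in simp)
    have e1: "(\<lambda>y. \<Sum>i<n. (- u i) * y i) = (\<lambda>y. - Z y)" by (simp add: Z_def sum_negf)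
    have e2: "sd * sqrt (\<Sum>i<n. (- u i)^2) = \<tau>" by (simp add: \<tau>_def Su_def)
    have DZ2: "distributed M lborel (\<lambda>y. - Z y) (normal_density (\<Sum>i<n. (- u i) * mu i) \<tau>)"
      using DZ' unfolding e1 e2 .
    have nn: "(\<Sum>i<n. (- u i) * mu i) \<ge> 0" using False by (simp add: sum_negf)
    have "cst \<le> measure M {x\<in>space M. \<tau> * t \<le> - Z x}"
      unfolding cst_def by (rule P.normal_tail[OF DZ2 tau nn])
    also have "\<dots> \<le> measure M U"
      by (rule P.finite_measure_mono[OF _ Us]) (auto simp: U_def)
    finally show ?thesis .
  qed
  have mV: "measure M V = 0"
  proof -
    have "distributed M lborel (\<lambda>y. \<Sum>i<n. v i * y i)
        (normal_density (\<Sum>i<n. v i * mu i) (sd * sqrt (\<Sum>i<n. (v i)^2)))"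
      unfolding M by (rule GM_lincomb[where a=v, OF sd j0])
    from P.normal_zero[OF this] show ?thesis by (simp add: V_def)
  qed
  have mC: "measure M C \<le> (sqrt 2 / exp (1/2))^n"
    unfolding C_def M by (rule GM_chernoff[OF sd])
  have "measure M U \<le> measure M (B \<union> C \<union> V)"
    by (rule P.finite_measure_mono) (use Bs Cs Vs in \<open>auto simp: B_def\<close>)
  also have "\<dots> \<le> measure M B + measure M C + measure M V"
  proof -
    have "measure M (B \<union> C \<union> V) \<le> measure M (B \<union> C) + measure M V"
      using Bs Cs Vs by (intro measure_Un_le) auto
    also have "measure M (B \<union> C) \<le> measure M B + measure M C"
      using Bs Cs by (intro measure_Un_le) auto
    finally show ?thesis by simp
  qed
  finally have mB: "measure M B \<ge> cst - (sqrt 2 / exp (1/2))^n"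
    using mU mV mC by simp
  have BE: "B \<subseteq> E1 n Xn \<beta> \<sigma>2 \<alpha>0"
  proof
    fix y assume yB: "y \<in> B"
    then have ysp: "y \<in> space M" and yU: "\<tau> * t \<le> \<bar>Z y\<bar>"
      and yC: "(\<Sum>i<n. (y i - mu i)^2) \<le> 2 * real n * sd^2"
      and yV: "(\<Sum>i<n. v i * y i) \<noteq> 0"
      by (auto simp: B_def U_def C_def V_def)
    have "(\<tau> * t)^2 \<le> (Z y)^2"
      using yU tau s by (metis abs_ge_zero mult_nonneg_nonneg less_imp_le power2_abs power_mono real_sqrt_ge_zero t_def)
    then have Z2: "\<sigma>2 * Su * s \<le> (Z y)^2"
      using Su s sd2 by (simp add: \<tau>_def t_def power_mult_distrib)
    have "(Z y)^2 \<le> proj_quad n Xn y * Su"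
      using proj_lower[OF fr, of y cv] by (simp add: Z_def Su_def u_def mult.commute)
    with Z2 have "\<sigma>2 * Su * s \<le> proj_quad n Xn y * Su" by simp
    then have proj: "\<sigma>2 * s \<le> proj_quad n Xn y" using Su by (simp add: mult.commute mult.left_commute)
    have rle: "resid_quad n Xn y \<le> 2 * real n * \<sigma>2"
      using resid_le[OF fr, of y \<beta>] yC sd2 by (simp add: mu_def)
    have rpos: "resid_quad n Xn y > 0"
    proof -
      have "resid_quad n Xn y \<noteq> 0" using resid_zero[OF fr _ v(2)] yV by blast
      then show ?thesis using resid_nonneg[OF fr, of y] by simp
    qed
    have n1: "real n - real p - 1 > 0" using nlarge by (simp add: p_def)
    have "Q \<le> (real n - real p - 1) / real p * (\<sigma>2 * s / (2 * real n * \<sigma>2))"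
    proof -
      have "(real n - real p - 1) / real p * (\<sigma>2 * s / (2 * real n * \<sigma>2))
          = (real n - real p - 1) * 3 * Q / (2 * real n)"
        using s2 p1 nlarge by (simp add: s_def field_simps)
      moreover have "Q \<le> (real n - real p - 1) * 3 * Q / (2 * real n)"
      proof -
        have "2 * real n \<le> (real n - real p - 1) * 3" using nlarge by (simp add: p_def)
        then have "Q * (2 * real n) \<le> (real n - real p - 1) * 3 * Q" using Q
          by (metis mult.commute mult_left_mono less_imp_le)
        then show ?thesis using nlarge by (simp add: le_divide_eq)
      qed
      ultimately show ?thesis by simp
    qed
    also have "\<dots> \<le> (real n - real p - 1) / real p * (proj_quad n Xn y / resid_quad n Xn y)"
    proof (rule mult_left_mono)
      have "\<sigma>2 * s / (2 * real n * \<sigma>2) \<le> proj_quad n Xn y / (2 * real n * \<sigma>2)"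
        using proj s2 nlarge by (intro divide_right_mono) auto
      also have "\<dots> \<le> proj_quad n Xn y / resid_quad n Xn y"
        using rle rpos proj s s2 nlarge by (intro divide_left_mono) (auto intro: mult_nonneg_nonneg order_trans[OF _ proj])
      finally show "\<sigma>2 * s / (2 * real n * \<sigma>2) \<le> proj_quad n Xn y / resid_quad n Xn y" .
      show "0 \<le> (real n - real p - 1) / real p" using n1 by simp
    qed
    also have "\<dots> = F_stat n Xn y" by (simp add: F_stat_def p_def)
    finally have FQ: "Q \<le> F_stat n Xn y" .
    have "F_quantile (real CARD('p)) (real n - real CARD('p) - 1) (1 - \<alpha>0) \<le> Q"
      unfolding Q_def by (rule F_quantile_upper) (use al0 nlarge in auto)
    with FQ ysp show "y \<in> E1 n Xn \<beta> \<sigma>2 \<alpha>0" by (simp add: E1_def M_def)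
  qed
  show ?thesis
    using Bs BE mB by (auto simp: M_def cst_def t_def s_def Q_def p_def)
qed




lemma chern_lim: "(\<lambda>n. (sqrt 2 / exp (1/2 :: real))^n) \<longlonglongrightarrow> 0"
proof (rule LIMSEQ_power_zero)
  have e: "exp (1/2 :: real) \<ge> 3/2" using exp_ge_add_one_self[of "1/2 :: real"] by simp
  have "sqrt 2 < sqrt (9/4 :: real)" by simp
  also have "sqrt (9/4 :: real) = 3/2" by (rule real_sqrt_unique) (simp_all add: power2_eq_square)
  finally have "sqrt 2 < (3/2 :: real)" .
  then have "sqrt 2 / exp (1/2) < (1::real)" using e by (simp add: divide_less_eq)
  then show "norm (sqrt 2 / exp (1/2 :: real)) < 1" by simp
qed

theorem lemma4:
  fixes X :: "nat \<Rightarrow> nat \<Rightarrow> real^'p"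
    and \<beta> :: "real^'p"
    and \<sigma>2 \<alpha>0 :: real
    and f :: "nat \<Rightarrow> (nat \<Rightarrow> real) \<Rightarrow> real"
  assumes "\<sigma>2 > 0"
    and "0 < \<alpha>0" "\<alpha>0 < 1"
    and "\<And>n. n \<ge> CARD('p) + 2 \<Longrightarrow> full_col_rank n (X n)"
    and "\<And>n. f n \<in> borel_measurable (Ydist n (X n) \<beta> \<sigma>2)"
    and "\<And>\<epsilon>. \<epsilon> > 0 \<Longrightarrow>
      (\<lambda>n. measure (Ydist n (X n) \<beta> \<sigma>2) {y \<in> space (Ydist n (X n) \<beta> \<sigma>2). f n y > \<epsilon>})
        \<longlonglongrightarrow> 0"
  shows "\<forall>\<epsilon>>0. (\<lambda>n. cond_pr (Ydist n (X n) \<beta> \<sigma>2)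
            {y \<in> space (Ydist n (X n) \<beta> \<sigma>2). f n y > \<epsilon>} (E1 n (X n) \<beta> \<sigma>2 \<alpha>0))
          \<longlonglongrightarrow> 0"
proof (intro allI impI)
  fix \<epsilon> :: real assume eps: "\<epsilon> > 0"
  define M where "M n = Ydist n (X n) \<beta> \<sigma>2" for n
  define A where "A n = {y \<in> space (M n). f n y > \<epsilon>}" for n
  have prob: "prob_space (M n)" for n
    unfolding M_def Ydist_GM by (rule GM_prob) (use assms(1) in simp)
  have As: "A n \<in> sets (M n)" for n
    using assms(5)[of n] unfolding A_def M_def by (simp add: borel_measurable_iff_greater)
  define cst where "cst = measure (density lborel std_normal_density) {sqrt (3 * real CARD('p) * (2 / \<alpha>0))..}"
  have cpos: "cst > 0" unfolding cst_def by (rule std_tail_pos)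
  have ev1: "eventually (\<lambda>n. (sqrt 2 / exp (1/2 :: real))^n < cst / 2) sequentially"
    using order_tendstoD(2)[OF chern_lim, of "cst/2"] cpos by simp
  have ev2: "eventually (\<lambda>n. n \<ge> 3 * CARD('p) + 5) sequentially"
    by (rule eventually_ge_at_top)
  have lowE: "eventually (\<lambda>n. E1 n (X n) \<beta> \<sigma>2 \<alpha>0 \<in> sets (M n) \<longrightarrow>
      measure (M n) (E1 n (X n) \<beta> \<sigma>2 \<alpha>0) \<ge> cst / 2) sequentially"
    using ev1 ev2
  proof eventually_elim
    case (elim n)
    interpret P: prob_space "M n" by (rule prob)
    have fr: "full_col_rank n (X n)" using elim(2) by (intro assms(4)) simp
    obtain B where B: "B \<in> sets (M n)" "B \<subseteq> E1 n (X n) \<beta> \<sigma>2 \<alpha>0"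
      "measure (M n) B \<ge> cst - (sqrt 2 / exp (1/2))^n"
      using key_lower[OF assms(1-3) fr elim(2), of \<beta>] unfolding M_def cst_def by blast
    show ?case
    proof
      assume "E1 n (X n) \<beta> \<sigma>2 \<alpha>0 \<in> sets (M n)"
      then have "measure (M n) B \<le> measure (M n) (E1 n (X n) \<beta> \<sigma>2 \<alpha>0)"
        using B(2) by (rule P.finite_measure_mono[rotated])
      then show "measure (M n) (E1 n (X n) \<beta> \<sigma>2 \<alpha>0) \<ge> cst / 2"
        using B(3) elim(1) by simp
    qed
  qed
  have up: "eventually (\<lambda>n. cond_pr (M n) (A n) (E1 n (X n) \<beta> \<sigma>2 \<alpha>0) \<le> measure (M n) (A n) / (cst / 2)) sequentially"
    using lowE
  proof eventually_elim
    case (elim n)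
    interpret P: prob_space "M n" by (rule prob)
    show ?case
    proof (cases "E1 n (X n) \<beta> \<sigma>2 \<alpha>0 \<in> sets (M n)")
      case False
      then show ?thesis using cpos by (simp add: cond_pr_def measure_notin_sets)
    next
      case True
      let ?E = "E1 n (X n) \<beta> \<sigma>2 \<alpha>0"
      have mE: "measure (M n) ?E \<ge> cst / 2" using elim True by simp
      have "measure (M n) (A n \<inter> ?E) \<le> measure (M n) (A n)"
        by (rule P.finite_measure_mono[OF _ As]) auto
      then have "cond_pr (M n) (A n) ?E \<le> measure (M n) (A n) / measure (M n) ?E"
        unfolding cond_pr_def using mE cpos by (intro divide_right_mono) auto
      also have "\<dots> \<le> measure (M n) (A n) / (cst / 2)"
        using mE cpos by (intro divide_left_mono) auto
      finally show ?thesis .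
    qed
  qed
  have low: "eventually (\<lambda>n. 0 \<le> cond_pr (M n) (A n) (E1 n (X n) \<beta> \<sigma>2 \<alpha>0)) sequentially"
    by (simp add: cond_pr_def)
  have lim: "(\<lambda>n. measure (M n) (A n) / (cst / 2)) \<longlonglongrightarrow> 0"
    by (rule tendsto_divide_zero) (use assms(6)[OF eps] in \<open>simp add: M_def A_def\<close>)
  have "(\<lambda>n. cond_pr (M n) (A n) (E1 n (X n) \<beta> \<sigma>2 \<alpha>0)) \<longlonglongrightarrow> 0"
    by (rule tendsto_sandwich[OF low up tendsto_const lim])
  then show "(\<lambda>n. cond_pr (Ydist n (X n) \<beta> \<sigma>2)
            {y \<in> space (Ydist n (X n) \<beta> \<sigma>2). f n y > \<epsilon>} (E1 n (X n) \<beta> \<sigma>2 \<alpha>0)) \<longlonglongrightarrow> 0"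
    by (simp add: M_def A_def)
qed


end
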